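(* Let $1 \le s \le r$ be fixed integers and $n \ge r$. Define $\theta = \binom{n-s}{r-s}\big/\binom{n}{r}$ and $\psi = \dfrac{r^r\, n^{-(s+2)}}{(\max\{r-2s,0\})!}$. Then for any sequence of nonnegative integers $k = k_n$ with $k = O(n^s\log n)$, as $n \to \infty$, \[ (1 - 2\theta + \psi)^k = (1-\theta)^{2k}\left(1 + O\!\left(\frac{\log n}{n^{\min\{2,s\}}}\right)\right). \] *)

theory Defs
  imports Complex_Main "HOL-Library.Landau_Symbols"
begin

definition theta :: "nat \<Rightarrow> nat \<Rightarrow> nat \<Rightarrow> real" where
  "theta r s n = real ((n - s) choose (r - s)) / real (n choose r)"

text \<open>psi = r^r n^(-(s+2)) / (max (r-2s) 0)!; nat subtraction r - 2*s realises max (r-2s) 0.\<close>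
definition psi :: "nat \<Rightarrow> nat \<Rightarrow> nat \<Rightarrow> real" where
  "psi r s n = real r ^ r / (real n ^ (s + 2) * fact (r - 2 * s))"

end

theory Submission
  imports Defs
begin

lemma pow_dev: fixes d :: real shows "\<bar>(1+d)^k - 1\<bar> \<le> (1+\<bar>d\<bar>)^k - 1"
proof (induction k)
  case 0 then show ?case by simp
next
  case (Suc k)
  have "(1+d)^Suc k - 1 = (1+d)*((1+d)^k - 1) + d" by (simp add: algebra_simps)
  then have "\<bar>(1+d)^Suc k - 1\<bar> \<le> \<bar>1+d\<bar>*\<bar>(1+d)^k - 1\<bar> + \<bar>d\<bar>"
    by (metis abs_mult abs_triangle_ineq)
  also have "\<dots> \<le> (1+\<bar>d\<bar>)*((1+\<bar>d\<bar>)^k - 1) + \<bar>d\<bar>"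
    by (intro add_mono mult_mono Suc.IH) auto
  also have "\<dots> = (1+\<bar>d\<bar>)^Suc k - 1" by (simp add: algebra_simps)
  finally show ?case .
qed

lemma pow_dev2: fixes d :: real assumes "real k * \<bar>d\<bar> \<le> 1"
  shows "\<bar>(1+d)^k - 1\<bar> \<le> 2 * (real k * \<bar>d\<bar>)"
proof -
  have "(1+\<bar>d\<bar>)^k \<le> exp \<bar>d\<bar> ^ k"
    by (intro power_mono) (auto simp: exp_ge_add_one_self)
  also have "\<dots> = exp (real k * \<bar>d\<bar>)" by (simp add: exp_of_nat_mult)
  also have "\<dots> \<le> 1 + real k * \<bar>d\<bar> + (real k * \<bar>d\<bar>)^2"
    using assms by (intro exp_bound) auto
  also have "(real k * \<bar>d\<bar>)^2 \<le> real k * \<bar>d\<bar>"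
    using assms mult_left_le[of "real k*\<bar>d\<bar>" "real k*\<bar>d\<bar>"] by (simp add: power2_eq_square)
  finally show ?thesis using pow_dev[of d k] by linarith
qed

lemma theta_eq: assumes "s \<le> r" "r \<le> n"
  shows "theta r s n = real (r choose s) / real (n choose s)"
proof -
  have "(n choose r) * (r choose s) = (n choose s) * ((n - s) choose (r - s))"
    using choose_mult assms by blast
  then have "real (n choose r) * real (r choose s) = real (n choose s) * real ((n - s) choose (r - s))"
    by (metis of_nat_mult)
  moreover have "n choose r > 0" "n choose s > 0" using assms by auto
  ultimately show ?thesis unfolding theta_def by (simp add: field_simps)
qed

lemma theta_bound: assumes "1 \<le> s" "s \<le> r" "r \<le> n"
  shows "theta r s n \<le> real (r choose s) * real s ^ s / real n ^ s"
proof -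
  have "(real n / real s)^s \<le> real (n choose s)" using assms binomial_ge_n_over_k_pow_k[of s n] by simp
  moreover have "(real n / real s)^s > 0" using assms by simp
  ultimately have "real (r choose s) / real (n choose s) \<le> real (r choose s) / (real n / real s)^s"
    using assms by (intro divide_left_mono) (auto intro!: mult_pos_pos)
  then show ?thesis using theta_eq[OF assms(2,3)] assms by (simp add: power_divide)
qed

lemma theta_nonneg: "theta r s n \<ge> 0" unfolding theta_def by simp

lemma key:
  fixes t p A B K :: real and kk n s m :: nat
  assumes t0: "0 \<le> t" and th: "t \<le> 1/2" and tA: "t \<le> A / real n ^ s"
    and p: "p = B / real n ^ (s+2)" and B: "B \<ge> 0" and K: "K \<ge> 0"
    and kk: "real kk \<le> K * (real n ^ s * ln (real n))" and n: "n \<ge> 1"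
    and m: "m \<le> 2" "m \<le> s"
    and small: "4*K*(A^2+B) * ln (real n) / real n ^ m \<le> 1"
  shows "\<bar>((1-2*t+p)/(1-t)^2)^kk - 1\<bar> \<le> 2*(4*K*(A^2+B)) * (ln (real n) / real n ^ m)"
proof -
  define d where "d = (p - t^2)/(1-t)^2"
  have t1: "(1-t)^2 \<ge> 1/4" proof -
    have "(1/2::real)^2 \<le> (1-t)^2" using t0 th by (intro power_mono) auto
    then show ?thesis by (simp add: power2_eq_square)
  qed
  have eq: "(1-2*t+p)/(1-t)^2 = 1 + d" unfolding d_def using t1
    by (simp add: field_simps power2_eq_square)
  have nn: "real n ^ (s+m) > 0" using n by simp
  have p0: "p \<ge> 0" using p B by simp
  have "real n ^ (s+m) \<le> real n ^ (s+2)" using n m by (intro power_increasing) auto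
  then have pb: "p \<le> B / real n ^ (s+m)" unfolding p using B nn
    by (intro divide_left_mono) auto
  have "0 \<le> A / real n ^ s" using t0 tA by linarith
  moreover have "real n ^ s > 0" using n by simp
  ultimately have A0: "A \<ge> 0" by (auto simp add: zero_le_divide_iff)
  have "t^2 \<le> (A / real n ^ s)^2" using t0 tA by (intro power_mono) auto
  also have "\<dots> = A^2 / real n ^ (2*s)" by (simp add: power_divide power_mult mult.commute)
  also have "\<dots> \<le> A^2 / real n ^ (s+m)" using n m
    by (intro divide_left_mono) (auto intro!: power_increasing)
  finally have tb: "t^2 \<le> A^2 / real n ^ (s+m)" .
  have "\<bar>d\<bar> = \<bar>p - t^2\<bar> / (1-t)^2" unfolding d_def by simp
  also have "\<dots> \<le> (p + t^2) / (1/4)" using t1 p0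
    by (intro frac_le) (auto simp: abs_le_iff)
  also have "\<dots> \<le> 4 * ((A^2+B) / real n ^ (s+m))" using pb tb by (simp add: add_divide_distrib)
  finally have db: "\<bar>d\<bar> \<le> 4 * ((A^2+B) / real n ^ (s+m))" .
  have ln0: "ln (real n) \<ge> 0" using n by simp
  have "real kk * \<bar>d\<bar> \<le> (K * (real n ^ s * ln (real n))) * (4 * ((A^2+B) / real n ^ (s+m)))"
    using kk db by (intro mult_mono) auto
  also have "\<dots> = 4*K*(A^2+B) * (ln (real n) / real n ^ m)" using n
    by (simp add: power_add field_simps)
  finally have kd: "real kk * \<bar>d\<bar> \<le> 4*K*(A^2+B) * (ln (real n) / real n ^ m)" .
  have "\<bar>(1+d)^kk - 1\<bar> \<le> 2 * (real kk * \<bar>d\<bar>)"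
    using kd small by (intro pow_dev2) simp
  then show ?thesis using kd eq by simp
qed

theorem corollary1:
  fixes r s :: nat and k :: "nat \<Rightarrow> nat"
  assumes "1 \<le> s" and "s \<le> r"
    and "(\<lambda>n. real (k n)) \<in> O(\<lambda>n. real n ^ s * ln (real n))"
  shows "\<exists>e :: nat \<Rightarrow> real. e \<in> O(\<lambda>n. ln (real n) / real n ^ min 2 s) \<and>
           (\<forall>\<^sub>F n in at_top. (1 - 2 * theta r s n + psi r s n) ^ k n
                = (1 - theta r s n) ^ (2 * k n) * (1 + e n))"
proof -
  define A where "A = real (r choose s) * real s ^ s"
  define B where "B = real r ^ r / fact (r - 2 * s)"
  define m where "m = min 2 s"
  have m: "m \<le> 2" "m \<le> s" "m \<ge> 1" using assms(1) unfolding m_def by auto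
  have B0: "B \<ge> 0" unfolding B_def by simp
  have A0: "A \<ge> 0" unfolding A_def by simp
  have psi: "psi r s n = B / real n ^ (s+2)" for n unfolding psi_def B_def by simp
  obtain K where K: "K > 0" "eventually (\<lambda>n. norm (real (k n)) \<le> K * norm (real n ^ s * ln (real n))) at_top"
    using landau_o.bigE[OF assms(3)] by blast
  define D where "D = 4*K*(A^2+B)"
  have lim1: "((\<lambda>n. ln (real n) / real n) \<longlongrightarrow> 0) at_top"
    using filterlim_compose[OF ln_x_over_x_tendsto_0 filterlim_real_sequentially] by (simp add: o_def)
  have "((\<lambda>n. D * (ln (real n) / real n)) \<longlongrightarrow> D * 0) at_top"
    by (intro tendsto_mult lim1 tendsto_const)
  then have evD: "eventually (\<lambda>n. D * (ln (real n) / real n) < 1) at_top"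
    by (intro order_tendstoD(2)) auto
  have evn: "eventually (\<lambda>n. n \<ge> max (max 1 r) (nat \<lceil>2*A\<rceil>)) at_top"
    by (rule eventually_ge_at_top)
  define e where "e n = (if theta r s n \<le> 1/2 then ((1 - 2 * theta r s n + psi r s n)/(1 - theta r s n)^2) ^ k n - 1 else 0)" for n
  have ev: "eventually (\<lambda>n. theta r s n \<le> 1/2 \<and> \<bar>e n\<bar> \<le> 2*D * (ln (real n) / real n ^ m) \<and> ln (real n) \<ge> 0 \<and> real n ^ m > 0) at_top"
    using evD evn K(2)
  proof eventually_elim
    case (elim n)
    have n1: "n \<ge> 1" "n \<ge> r" "real n \<ge> 2*A" using elim(2) by auto
    have ln0: "ln (real n) \<ge> 0" using n1 by simp
    have npos: "real n > 0" using n1 by simp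
    have tb: "theta r s n \<le> A / real n ^ s" using theta_bound[OF assms(1,2) n1(2)] unfolding A_def by simp
    have "real n ^ 1 \<le> real n ^ s" using n1 assms(1) by (intro power_increasing) auto
    then have "A / real n ^ s \<le> A / real n" using A0 npos by (intro divide_left_mono) auto
    also have "\<dots> \<le> 1/2" using n1 npos by (simp add: pos_divide_le_eq)
    finally have th: "theta r s n \<le> 1/2" using tb by linarith
    have "real n ^ 1 \<le> real n ^ m" using n1 m by (intro power_increasing) auto
    then have lnm: "ln (real n) / real n ^ m \<le> ln (real n) / real n" using ln0 npos
      by (intro divide_left_mono) auto
    have "D * (ln (real n) / real n ^ m) \<le> D * (ln (real n) / real n)"
      using lnm K(1) A0 B0 unfolding D_def by (intro mult_left_mono) auto
    then have small: "4*K*(A^2+B) * ln (real n) / real n ^ m \<le> 1" using elim(1) unfolding D_def by simp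
    have kk: "real (k n) \<le> K * (real n ^ s * ln (real n))" using elim(3) ln0 npos by simp
    have "\<bar>e n\<bar> \<le> 2*D * (ln (real n) / real n ^ m)"
      unfolding e_def D_def using th
      by (simp only: if_True) (rule key[OF theta_nonneg th tb psi B0 _ kk n1(1) m(1,2) small], use K in auto)
    then show ?case using th ln0 npos by simp
  qed
  show ?thesis
  proof (intro exI conjI)
    show "e \<in> O(\<lambda>n. ln (real n) / real n ^ min 2 s)"
    proof (rule bigoI)
      show "eventually (\<lambda>n. norm (e n) \<le> (2*D) * norm (ln (real n) / real n ^ min 2 s)) at_top"
        using ev unfolding m_def by eventually_elim auto
    qed
    show "\<forall>\<^sub>F n in at_top. (1 - 2 * theta r s n + psi r s n) ^ k n
                = (1 - theta r s n) ^ (2 * k n) * (1 + e n)"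
      using ev
    proof eventually_elim
      case (elim n)
      then have th: "theta r s n \<le> 1/2" by simp
      then have nz: "(1 - theta r s n)^2 \<noteq> 0" by simp
      have "(1 - theta r s n) ^ (2 * k n) * (1 + e n)
          = ((1 - theta r s n)^2) ^ k n * ((1 - 2 * theta r s n + psi r s n)/(1 - theta r s n)^2) ^ k n"
        unfolding e_def using th by (simp add: power_mult)
      also have "\<dots> = (1 - 2 * theta r s n + psi r s n) ^ k n"
        using nz by (simp add: power_mult_distrib[symmetric])
      finally show ?case by simp
    qed
  qed
qed

end
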